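(* Let $\hat S = \{{\cal S}_{1}, \ldots, {\cal S}_{k}\}$ ($k \ge 1$) be a finite set of services and let $q_1, \ldots, q_m$ be real-valued QoS parameters, each either positively monotonic (higher is better) or negatively monotonic (lower is better). For each parameter $q_t$ let $Max_t, Min_t$ be the maximum and minimum of $q_t({\cal S}_j)$ over $\hat S$, and define $NV_t({\cal S}_j) = 1$ if $Max_t = Min_t$, otherwise $NV_t({\cal S}_j) = \frac{q_t({\cal S}_j) - Min_t}{Max_t - Min_t}$ for positively monotonic $q_t$ and $NV_t({\cal S}_j) = \frac{Max_t - q_t({\cal S}_j)}{Max_t - Min_t}$ for negatively monotonic $q_t$; let $Dev_t({\cal S}_j) = 1 - NV_t({\cal S}_j)$. Choose the representative ${\cal S}_l$ as a service minimizing $\max_t Dev_t$; among tied services, choose one minimizing the second largest deviation, and so on (i.e. minimize lexicographically the vector of deviations sorted in non-increasing order), breaking any remaining ties arbitrarily. Then the QoS vector $(q_1({\cal S}_l), \ldots, q_m({\cal S}_l))$ lies on the Pareto-optimal front of $\{(q_1({\cal S}_j), \ldots, q_m({\cal S}_j)) : 1 \le j \le k\}$: there is no ${\cal S}_j \in \hat S$ that is at least as good as ${\cal S}_l$ in every parameter and strictly better in at least one parameter.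
   Context: In the first-level abstraction of web services, each class of services with identical input and output sets is replaced by one abstract service, which is assigned the QoS values of the "best representative" service of the class selected as described in the claim. "At least as good" means $\ge$ for positively monotonic parameters and $\le$ for negatively monotonic parameters. *)

theory Defs
  imports Complex_Main
begin

text \<open>QoS parameters indexed by t < m,
  q t s is the value of parameter t at service s; pos t says q t is positively monotonic
  (otherwise negatively monotonic).\<close>

definition MaxQ :: "(nat \<Rightarrow> 'a \<Rightarrow> real) \<Rightarrow> 'a set \<Rightarrow> nat \<Rightarrow> real" where
  "MaxQ q S t = Max (q t ` S)"

definition MinQ :: "(nat \<Rightarrow> 'a \<Rightarrow> real) \<Rightarrow> 'a set \<Rightarrow> nat \<Rightarrow> real" where
  "MinQ q S t = Min (q t ` S)"

definition NV :: "(nat \<Rightarrow> 'a \<Rightarrow> real) \<Rightarrow> (nat \<Rightarrow> bool) \<Rightarrow> 'a set \<Rightarrow> nat \<Rightarrow> 'a \<Rightarrow> real" where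
  "NV q pos S t s =
     (if MaxQ q S t = MinQ q S t then 1
      else if pos t then (q t s - MinQ q S t) / (MaxQ q S t - MinQ q S t)
      else (MaxQ q S t - q t s) / (MaxQ q S t - MinQ q S t))"

definition Dev :: "(nat \<Rightarrow> 'a \<Rightarrow> real) \<Rightarrow> (nat \<Rightarrow> bool) \<Rightarrow> 'a set \<Rightarrow> nat \<Rightarrow> 'a \<Rightarrow> real" where
  "Dev q pos S t s = 1 - NV q pos S t s"

definition dev_sorted :: "nat \<Rightarrow> (nat \<Rightarrow> 'a \<Rightarrow> real) \<Rightarrow> (nat \<Rightarrow> bool) \<Rightarrow> 'a set \<Rightarrow> 'a \<Rightarrow> real list" where
  "dev_sorted m q pos S s = rev (sort (map (\<lambda>t. Dev q pos S t s) [0..<m]))"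

definition is_representative :: "nat \<Rightarrow> (nat \<Rightarrow> 'a \<Rightarrow> real) \<Rightarrow> (nat \<Rightarrow> bool) \<Rightarrow> 'a set \<Rightarrow> 'a \<Rightarrow> bool" where
  "is_representative m q pos S l \<longleftrightarrow>
     l \<in> S \<and> (\<forall>j\<in>S. \<not> ord_class.lexordp (dev_sorted m q pos S j) (dev_sorted m q pos S l))"

definition at_least_as_good :: "(nat \<Rightarrow> bool) \<Rightarrow> (nat \<Rightarrow> 'a \<Rightarrow> real) \<Rightarrow> nat \<Rightarrow> 'a \<Rightarrow> 'a \<Rightarrow> bool" where
  "at_least_as_good pos q t j l \<longleftrightarrow> (if pos t then q t j \<ge> q t l else q t j \<le> q t l)"

definition strictly_better :: "(nat \<Rightarrow> bool) \<Rightarrow> (nat \<Rightarrow> 'a \<Rightarrow> real) \<Rightarrow> nat \<Rightarrow> 'a \<Rightarrow> 'a \<Rightarrow> bool" where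
  "strictly_better pos q t j l \<longleftrightarrow> (if pos t then q t j > q t l else q t j < q t l)"

definition dominates :: "nat \<Rightarrow> (nat \<Rightarrow> bool) \<Rightarrow> (nat \<Rightarrow> 'a \<Rightarrow> real) \<Rightarrow> 'a \<Rightarrow> 'a \<Rightarrow> bool" where
  "dominates m pos q j l \<longleftrightarrow>
     (\<forall>t<m. at_least_as_good pos q t j l) \<and> (\<exists>t<m. strictly_better pos q t j l)"

end

theory Submission
  imports Defs
begin

lemma insort_mono:
  fixes as bs :: "real list"
  assumes "list_all2 (\<le>) as bs" "sorted as" "sorted bs" "x \<le> y"
  shows "list_all2 (\<le>) (insort x as) (insort y bs)"
  using assms
proof (induction as arbitrary: x y bs)
  case Nil
  then show ?case by simp
next
  case (Cons a as)
  from Cons.prems(1) obtain b bs' where bs: "bs = b # bs'" and ab: "a \<le> b"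
    and r: "list_all2 (\<le>) as bs'" by (auto simp: list_all2_Cons1)
  have sa: "sorted as" and sb: "sorted bs'" using Cons.prems bs by auto
  have ia: "insort a as = a # as" using Cons.prems(2) by (cases as) auto
  have ib: "insort b bs' = b # bs'" using Cons.prems(3) bs by (cases bs') auto
  show ?case
  proof (cases "x \<le> a")
    case True
    note xa = True
    show ?thesis
    proof (cases "y \<le> b")
      case True
      then show ?thesis using xa bs Cons.prems ab r by simp
    next
      case False
      have "list_all2 (\<le>) (insort a as) (insort y bs')"
        using Cons.IH[OF r sa sb] ab False by simp
      then show ?thesis using xa False bs ab ia by simp
    qed
  next
    case False
    note xa = False
    show ?thesis
    proof (cases "y \<le> b")
      case True
      have "list_all2 (\<le>) (insort x as) (insort b bs')"
        using Cons.IH[OF r sa sb] True Cons.prems(4) by simp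
      then show ?thesis using xa True bs Cons.prems(4) ib by simp
    next
      case False
      then show ?thesis using xa bs Cons.IH[OF r sa sb] Cons.prems(4) ab by simp
    qed
  qed
qed

lemma sort_mono:
  fixes xs ys :: "real list"
  assumes "list_all2 (\<le>) xs ys"
  shows "list_all2 (\<le>) (sort xs) (sort ys)"
  using assms
proof (induction rule: list_all2_induct)
  case Nil
  then show ?case by simp
next
  case (Cons x xs y ys)
  then show ?case by (simp add: insort_mono)
qed

lemma sum_less:
  fixes xs ys :: "real list"
  assumes "list_all2 (\<le>) xs ys" "\<exists>i<length xs. xs!i < ys!i"
  shows "sum_list xs < sum_list ys"
  using assms
proof (induction rule: list_all2_induct)
  case Nil
  then show ?case by simp
next
  case (Cons x xs y ys)
  have "sum_list xs \<le> sum_list ys"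
    using Cons.hyps(2) by (induction rule: list_all2_induct) auto
  show ?case
  proof (cases "x < y")
    case True
    then show ?thesis using \<open>sum_list xs \<le> sum_list ys\<close> by simp
  next
    case False
    then obtain i where "i < length xs" "xs!i < ys!i" using Cons.prems
      by (metis Suc_less_eq gr0_implies_Suc length_Cons not_gr0 nth_Cons_0 nth_Cons_Suc)
    then have "sum_list xs < sum_list ys" using Cons.IH by blast
    then show ?thesis using Cons.hyps(1) by simp
  qed
qed

lemma sum_insort: "sum_list (insort x (xs::real list)) = x + sum_list xs"
  by (induction xs) auto

lemma sum_sort: "sum_list (sort (xs::real list)) = sum_list xs"
  by (induction xs) (auto simp: sum_insort)

lemma lex_less:
  fixes xs ys :: "real list"
  assumes "list_all2 (\<le>) xs ys" "xs \<noteq> ys"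
  shows "ord_class.lexordp xs ys"
  using assms
proof (induction rule: list_all2_induct)
  case Nil
  then show ?case by simp
next
  case (Cons x xs y ys)
  show ?case
  proof (cases "x < y")
    case True
    then show ?thesis by (rule lexordp.Cons)
  next
    case False
    then have "x = y" using Cons.hyps(1) by simp
    then have "xs \<noteq> ys" using Cons.prems by simp
    then show ?thesis using Cons.IH \<open>x = y\<close> by (simp add: lexordp.Cons_eq)
  qed
qed

lemma dev_le:
  assumes fin: "finite S" and j: "j \<in> S" and l: "l \<in> S"
    and g: "at_least_as_good pos q t j l"
  shows "Dev q pos S t j \<le> Dev q pos S t l"
    and "strictly_better pos q t j l \<Longrightarrow> Dev q pos S t j < Dev q pos S t l"
proof -
  have mj: "q t j \<le> MaxQ q S t" "q t l \<le> MaxQ q S t"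
    using fin j l by (auto simp: MaxQ_def)
  have nj: "MinQ q S t \<le> q t j" "MinQ q S t \<le> q t l"
    using fin j l by (auto simp: MinQ_def)
  show "Dev q pos S t j \<le> Dev q pos S t l"
  proof (cases "MaxQ q S t = MinQ q S t")
    case True then show ?thesis by (simp add: Dev_def NV_def)
  next
    case False
    then have d: "MaxQ q S t - MinQ q S t > 0" using mj nj by linarith
    show ?thesis using g False d
      by (auto simp: Dev_def NV_def at_least_as_good_def divide_right_mono split: if_splits)
  qed
  assume s: "strictly_better pos q t j l"
  then have "q t j \<noteq> q t l" by (auto simp: strictly_better_def split: if_splits)
  then have False': "MaxQ q S t \<noteq> MinQ q S t" using mj nj by linarith
  then have d: "MaxQ q S t - MinQ q S t > 0" using mj nj by linarith
  show "Dev q pos S t j < Dev q pos S t l" using s False' d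
    by (auto simp: Dev_def NV_def strictly_better_def divide_strict_right_mono split: if_splits)
qed

theorem lemma5:
  fixes S :: "'a set" and m :: nat and q :: "nat \<Rightarrow> 'a \<Rightarrow> real" and pos :: "nat \<Rightarrow> bool" and l :: 'a
  assumes "finite S" and "S \<noteq> {}"
    and "is_representative m q pos S l"
  shows "\<not> (\<exists>j\<in>S. dominates m pos q j l)"
proof
  assume "\<exists>j\<in>S. dominates m pos q j l"
  then obtain j where j: "j \<in> S" and dm: "dominates m pos q j l" by blast
  have l: "l \<in> S" using assms(3) by (simp add: is_representative_def)
  define xs where "xs = map (\<lambda>t. Dev q pos S t j) [0..<m]"
  define ys where "ys = map (\<lambda>t. Dev q pos S t l) [0..<m]"
  have a2: "list_all2 (\<le>) xs ys"
    using dm dev_le(1)[OF assms(1) j l]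
    by (auto simp: xs_def ys_def list_all2_conv_all_nth dominates_def)
  have ex: "\<exists>i<length xs. xs!i < ys!i"
    using dm dev_le(2)[OF assms(1) j l]
    by (auto simp: xs_def ys_def dominates_def strictly_better_def at_least_as_good_def)
  have s: "list_all2 (\<le>) (sort xs) (sort ys)" using sort_mono[OF a2] .
  have "sum_list (sort xs) < sum_list (sort ys)"
    using sum_less[OF a2 ex] by (simp add: sum_sort)
  then have ne: "rev (sort xs) \<noteq> rev (sort ys)" by auto
  have "list_all2 (\<le>) (rev (sort xs)) (rev (sort ys))" using s by simp
  then have "ord_class.lexordp (rev (sort xs)) (rev (sort ys))" using lex_less ne by blast
  then show False using assms(3) j
    by (simp add: is_representative_def dev_sorted_def xs_def ys_def)
qed

end
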